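(* Let $p\in(0,1)$, let $(\mathcal M,d,0)$ be a finite pointed $p$-metric space, $a\in\mathbb R^{\mathcal M\setminus\{0\}}$ and $z\in\mathcal M\setminus\{0\}$ with $a_z=0$. Let $T\in\mathcal T(\mathcal M)$ satisfy $|\mathrm{desc}_T(z)|\ge1$ and put \[T(z,a):=\sum_{y\in\mathrm{desc}_T(z)}|c_T(y,a)|^pd^p(z,y)+\Big|\sum_{y\in\mathrm{desc}_T(z)}c_T(y,a)\Big|^pd^p(\mathrm{pred}_T(z),z).\] Assume that $T(z,a)\ge\sum_{y\in\mathrm{desc}_T(z)}|c_T(y,a)|^pd^p(\mathrm{pred}_T(z),y)$. Then \[T(a)\ge\Big\|\sum_{x\in\mathcal M\setminus\{0,z\}}a_x\delta(x)\Big\|_{\mathcal F_p(\mathcal M\setminus\{z\})}.\]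
   Context: A $p$-metric space is a set with $d$ such that $d^p$ is a metric; pointed means a distinguished point $0$. A $p$-Banach space is a complete vector space with a $p$-norm. $\delta(x)$ is evaluation at $x$ on real functions vanishing at $0$, and $\mathcal F_p(\mathcal M)$ is the completion of $\mathrm{span}\{\delta(x)\}$ under $\|\sum a_i\delta(x_i)\|=\sup\|\sum a_if(x_i)\|_Y$ over $p$-Banach $Y$ and $1$-Lipschitz $f:\mathcal M\to Y$ with $f(0)=0$; $\mathcal M\setminus\{z\}$ carries the restricted metric. $\mathcal T(\mathcal M)$ is the set of trees on $\mathcal M$ rooted at $0$; for $x\ne0$, $\mathrm{pred}_T(x)$ is the neighbour of $x$ on the path to $0$, $e_x^T=\{\mathrm{pred}_T(x),x\}$, $V_x^T$ is the vertex set of the subtree rooted at $x$, and $\mathrm{desc}_T(x)=\{v:\mathrm{pred}_T(v)=x\}$. $c_T(x,a)=\sum_{y\in V_x^T}a_y$ and $T(a)=\big(\sum_{x\in\mathcal M\setminus\{0\}}|c_T(x,a)d(e_x^T)|^p\big)^{1/p}$. *)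

theory Defs
  imports "HOL-Analysis.Analysis"
begin

definition p_metric :: "real \<Rightarrow> 'a set \<Rightarrow> ('a \<Rightarrow> 'a \<Rightarrow> real) \<Rightarrow> bool" where
  "p_metric p M d \<longleftrightarrow>
     (\<forall>x\<in>M. \<forall>y\<in>M. d x y \<ge> 0 \<and> (d x y = 0 \<longleftrightarrow> x = y) \<and> d x y = d y x) \<and>
     (\<forall>x\<in>M. \<forall>y\<in>M. \<forall>w\<in>M. d x w powr p \<le> d x y powr p + d y w powr p)"

definition p_norm :: "real \<Rightarrow> ('y::real_vector \<Rightarrow> real) \<Rightarrow> bool" where
  "p_norm p N \<longleftrightarrow>
     (\<forall>x. N x \<ge> 0) \<and> (\<forall>x. N x = 0 \<longleftrightarrow> x = 0) \<and>
     (\<forall>c x. N (c *\<^sub>R x) = \<bar>c\<bar> * N x) \<and>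
     (\<forall>x y. N (x + y) powr p \<le> N x powr p + N y powr p)"

definition p_banach :: "real \<Rightarrow> ('y::real_vector \<Rightarrow> real) \<Rightarrow> bool" where
  "p_banach p N \<longleftrightarrow> p_norm p N \<and>
     (\<forall>X::nat \<Rightarrow> 'y. (\<forall>e>0. \<exists>K. \<forall>m\<ge>K. \<forall>n\<ge>K. N (X m - X n) < e) \<longrightarrow>
        (\<exists>L. (\<lambda>n. N (X n - L)) \<longlonglongrightarrow> 0))"

text \<open>Rooted trees on M with root r0, encoded by the predecessor (parent) map:
  every vertex reaches the root by iterating pred; edges are {pred x, x} for x in M - {r0}.\<close>
definition is_tree :: "'a set \<Rightarrow> 'a \<Rightarrow> ('a \<Rightarrow> 'a) \<Rightarrow> bool" where
  "is_tree M r0 pred \<longleftrightarrow> pred r0 = r0 \<and> (\<forall>x\<in>M. pred x \<in> M \<and> (\<exists>n. (pred ^^ n) x = r0))"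

definition subtree :: "'a set \<Rightarrow> ('a \<Rightarrow> 'a) \<Rightarrow> 'a \<Rightarrow> 'a set" where
  "subtree M pred x = {v\<in>M. \<exists>n. (pred ^^ n) v = x}"

definition desc :: "'a set \<Rightarrow> 'a \<Rightarrow> ('a \<Rightarrow> 'a) \<Rightarrow> 'a \<Rightarrow> 'a set" where
  "desc M r0 pred x = {v\<in>M - {r0}. pred v = x}"

definition cT :: "'a set \<Rightarrow> ('a \<Rightarrow> 'a) \<Rightarrow> 'a \<Rightarrow> ('a \<Rightarrow> real) \<Rightarrow> real" where
  "cT M pred x a = (\<Sum>y\<in>subtree M pred x. a y)"

definition Tnorm :: "real \<Rightarrow> 'a set \<Rightarrow> 'a \<Rightarrow> ('a \<Rightarrow> 'a \<Rightarrow> real) \<Rightarrow> ('a \<Rightarrow> 'a) \<Rightarrow> ('a \<Rightarrow> real) \<Rightarrow> real" where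
  "Tnorm p M r0 d pred a =
     (\<Sum>x\<in>M - {r0}. \<bar>cT M pred x a * d (pred x) x\<bar> powr p) powr (1 / p)"

definition Tz :: "real \<Rightarrow> 'a set \<Rightarrow> 'a \<Rightarrow> ('a \<Rightarrow> 'a \<Rightarrow> real) \<Rightarrow> ('a \<Rightarrow> 'a) \<Rightarrow> 'a \<Rightarrow> ('a \<Rightarrow> real) \<Rightarrow> real" where
  "Tz p M r0 d pred z a =
     (\<Sum>y\<in>desc M r0 pred z. \<bar>cT M pred y a\<bar> powr p * d z y powr p)
     + \<bar>\<Sum>y\<in>desc M r0 pred z. cT M pred y a\<bar> powr p * d (pred z) z powr p"

end

theory Submission
  imports Defs
begin

lemma iter_in: "is_tree M r0 pred \<Longrightarrow> x \<in> M \<Longrightarrow> (pred ^^ n) x \<in> M"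
  by (induction n) (auto simp: is_tree_def)

lemma iter_r0: "is_tree M r0 pred \<Longrightarrow> (pred ^^ n) r0 = r0"
  by (induction n) (auto simp: is_tree_def)

lemma iter_mult: "(pred ^^ k) x = x \<Longrightarrow> (pred ^^ (k * m)) x = x"
proof (induction m)
  case (Suc m)
  have "(pred ^^ (k * Suc m)) x = (pred ^^ k) ((pred ^^ (k * m)) x)"
    by (simp add: funpow_add)
  then show ?case using Suc by simp
qed simp

lemma iter_after: assumes "is_tree M r0 pred" "(pred ^^ n) x = r0" "n \<le> m"
  shows "(pred ^^ m) x = r0"
proof -
  have "(pred ^^ m) x = (pred ^^ (m - n)) ((pred ^^ n) x)"
    using assms(3) by (simp add: funpow_add[symmetric, THEN fun_cong, simplified comp_def])
  then show ?thesis using assms iter_r0 by metis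
qed

lemma cycle: assumes "is_tree M r0 pred" "x \<in> M" "k \<ge> 1" "(pred ^^ k) x = x"
  shows "x = r0"
proof -
  obtain n where n: "(pred ^^ n) x = r0" using assms unfolding is_tree_def by blast
  have "n \<le> k * n" using assms(3) by simp
  then have "(pred ^^ (k * n)) x = r0" using iter_after[OF assms(1) n] by blast
  then show ?thesis using iter_mult[OF assms(4)] by simp
qed

definition depth :: "'a \<Rightarrow> ('a \<Rightarrow> 'a) \<Rightarrow> 'a \<Rightarrow> nat" where
  "depth r0 pred v = (LEAST n. (pred ^^ n) v = r0)"

lemma ancestors:
  assumes T: "is_tree M r0 pred" and v: "v \<in> M"
  shows "{x \<in> M - {r0}. v \<in> subtree M pred x} = (\<lambda>n. (pred ^^ n) v) ` {..<depth r0 pred v}"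
    and "inj_on (\<lambda>n. (pred ^^ n) v) {..<depth r0 pred v}"
proof -
  let ?h = "depth r0 pred v"
  have ex: "\<exists>n. (pred ^^ n) v = r0" using T v unfolding is_tree_def by blast
  have hv: "(pred ^^ ?h) v = r0" unfolding depth_def by (rule LeastI_ex[OF ex])
  have lt: "(pred ^^ n) v \<noteq> r0" if "n < ?h" for n
    using not_less_Least[of n "\<lambda>n. (pred ^^ n) v = r0"] that unfolding depth_def by blast
  show "{x \<in> M - {r0}. v \<in> subtree M pred x} = (\<lambda>n. (pred ^^ n) v) ` {..<?h}"
  proof (intro set_eqI iffI)
    fix x assume "x \<in> {x \<in> M - {r0}. v \<in> subtree M pred x}"
    then obtain n where x: "x \<in> M" "x \<noteq> r0" "(pred ^^ n) v = x" unfolding subtree_def by auto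
    have "n < ?h"
    proof (rule ccontr)
      assume "\<not> n < ?h"
      then have "(pred ^^ n) v = r0" using iter_after[OF T hv] by simp
      then show False using x by simp
    qed
    then show "x \<in> (\<lambda>n. (pred ^^ n) v) ` {..<?h}" using x by auto
  next
    fix x assume "x \<in> (\<lambda>n. (pred ^^ n) v) ` {..<?h}"
    then obtain n where "n < ?h" "x = (pred ^^ n) v" by auto
    then show "x \<in> {x \<in> M - {r0}. v \<in> subtree M pred x}"
      using lt iter_in[OF T v] v unfolding subtree_def by auto
  qed
  show "inj_on (\<lambda>n. (pred ^^ n) v) {..<?h}"
  proof (rule inj_onI, rule ccontr)
    have main: False if ij: "i < j" "j < ?h" "(pred ^^ i) v = (pred ^^ j) v" for i j
    proof -
      let ?y = "(pred ^^ i) v"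
      have "(pred ^^ (j - i)) ?y = (pred ^^ j) v"
        using ij(1) by (simp add: funpow_add[symmetric, THEN fun_cong, simplified comp_def])
      then have "(pred ^^ (j - i)) ?y = ?y" using ij by simp
      moreover have "j - i \<ge> 1" using ij by simp
      ultimately have "?y = r0" using cycle[OF T iter_in[OF T v]] by blast
      then show False using lt ij by simp
    qed
    fix i j assume "i \<in> {..<?h}" "j \<in> {..<?h}" "(pred ^^ i) v = (pred ^^ j) v" "i \<noteq> j"
    then show False using main[of i j] main[of j i] by (cases "i < j") auto
  qed
qed


lemma abel:
  fixes g :: "'a \<Rightarrow> 'b::real_vector"
  assumes T: "is_tree M r0 pred" and fin: "finite M" and r0: "r0 \<in> M" and g0: "g r0 = 0"
  shows "(\<Sum>x\<in>M-{r0}. a x *\<^sub>R g x) = (\<Sum>x\<in>M-{r0}. cT M pred x a *\<^sub>R (g x - g (pred x)))"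
proof -
  have sub: "subtree M pred x = {v\<in>M. v \<in> subtree M pred x}" for x
    by (auto simp: subtree_def)
  have anc: "(\<Sum>x\<in>{x\<in>M-{r0}. v \<in> subtree M pred x}. g x - g (pred x)) = g v" if v: "v \<in> M" for v
  proof -
    let ?h = "depth r0 pred v"
    have ex: "\<exists>n. (pred ^^ n) v = r0" using T v unfolding is_tree_def by blast
    have hv: "(pred ^^ ?h) v = r0" unfolding depth_def by (rule LeastI_ex[OF ex])
    have "(\<Sum>x\<in>{x\<in>M-{r0}. v \<in> subtree M pred x}. g x - g (pred x))
        = (\<Sum>n<?h. g ((pred ^^ n) v) - g (pred ((pred ^^ n) v)))"
      unfolding ancestors(1)[OF T v] by (subst sum.reindex[OF ancestors(2)[OF T v]]) simp
    also have "\<dots> = (\<Sum>n<?h. g ((pred ^^ n) v) - g ((pred ^^ Suc n) v))" by simp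
    also have "\<dots> = g v - g r0" using sum_lessThan_telescope'[of "\<lambda>n. g ((pred ^^ n) v)" ?h] by (simp add: hv)
    finally show ?thesis using g0 by simp
  qed
  have "(\<Sum>x\<in>M-{r0}. cT M pred x a *\<^sub>R (g x - g (pred x)))
      = (\<Sum>x\<in>M-{r0}. \<Sum>v\<in>M. if v \<in> subtree M pred x then a v *\<^sub>R (g x - g (pred x)) else 0)"
    unfolding cT_def scaleR_sum_left
    by (subst sub) (simp add: sum.inter_filter[OF fin])
  also have "\<dots> = (\<Sum>v\<in>M. \<Sum>x\<in>M-{r0}. if v \<in> subtree M pred x then a v *\<^sub>R (g x - g (pred x)) else 0)"
    by (rule sum.swap)
  also have "\<dots> = (\<Sum>v\<in>M. a v *\<^sub>R (\<Sum>x\<in>{x\<in>M-{r0}. v \<in> subtree M pred x}. g x - g (pred x)))"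
  proof (rule sum.cong[OF refl])
    fix v
    have "finite (M - {r0})" using fin by simp
    then show "(\<Sum>x\<in>M-{r0}. if v \<in> subtree M pred x then a v *\<^sub>R (g x - g (pred x)) else 0)
      = a v *\<^sub>R (\<Sum>x\<in>{x\<in>M-{r0}. v \<in> subtree M pred x}. g x - g (pred x))"
      unfolding scaleR_sum_right by (rule sum.inter_filter[symmetric])
  qed
  also have "\<dots> = (\<Sum>v\<in>M. a v *\<^sub>R g v)"
  proof (rule sum.cong[OF refl])
    fix v assume "v \<in> M"
    then show "a v *\<^sub>R (\<Sum>x\<in>{x\<in>M-{r0}. v \<in> subtree M pred x}. g x - g (pred x)) = a v *\<^sub>R g v"
      by (simp only: anc)
  qed
  also have "\<dots> = (\<Sum>v\<in>M-{r0}. a v *\<^sub>R g v)"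
    using fin r0 g0 by (simp add: sum.remove)
  finally show ?thesis by simp
qed

lemma subtree_decomp:
  assumes T: "is_tree M r0 pred" and fin: "finite M" and z: "z \<in> M" and zr: "z \<noteq> r0"
  shows "cT M pred z a = a z + (\<Sum>y\<in>desc M r0 pred z. cT M pred y a)"
proof -
  let ?D = "desc M r0 pred z"
  have set: "subtree M pred z = insert z (\<Union>y\<in>?D. subtree M pred y)"
  proof (intro set_eqI iffI)
    fix v assume "v \<in> subtree M pred z"
    then obtain n where v: "v \<in> M" "(pred ^^ n) v = z" unfolding subtree_def by auto
    show "v \<in> insert z (\<Union>y\<in>?D. subtree M pred y)"
    proof (cases n)
      case 0 then show ?thesis using v by simp
    next
      case (Suc m)
      let ?y = "(pred ^^ m) v"
      have py: "pred ?y = z" using v Suc by simp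
      have "?y \<noteq> r0" using py T zr unfolding is_tree_def by auto
      then have "?y \<in> ?D" using py iter_in[OF T v(1)] unfolding desc_def by auto
      moreover have "v \<in> subtree M pred ?y" using v unfolding subtree_def by auto
      ultimately show ?thesis by blast
    qed
  next
    fix v assume "v \<in> insert z (\<Union>y\<in>?D. subtree M pred y)"
    then show "v \<in> subtree M pred z"
    proof
      assume "v = z" then show ?thesis using z unfolding subtree_def by (auto intro: exI[of _ 0])
    next
      assume "v \<in> (\<Union>y\<in>?D. subtree M pred y)"
      then obtain y n where "y \<in> ?D" "v \<in> M" "(pred ^^ n) v = y" unfolding subtree_def by auto
      then have "(pred ^^ Suc n) v = z" unfolding desc_def by auto
      then show ?thesis using \<open>v \<in> M\<close> unfolding subtree_def by blast
    qed
  qed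
  have cyc: False if "n \<ge> 1" "y \<in> ?D" "(pred ^^ n) w = y" "pred w = z" for y w n
  proof -
    have "(pred ^^ n) (pred w) = pred ((pred ^^ n) w)" by (simp add: funpow_swap1)
    also have "\<dots> = z" using that unfolding desc_def by auto
    finally have "(pred ^^ n) z = z" using that by simp
    then have "z = r0" using cycle[OF T z that(1)] by simp
    then show False using zr by simp
  qed
  have notin: "z \<notin> (\<Union>y\<in>?D. subtree M pred y)"
  proof
    assume "z \<in> (\<Union>y\<in>?D. subtree M pred y)"
    then obtain y n where y: "y \<in> ?D" "(pred ^^ n) z = y" unfolding subtree_def by auto
    have "(pred ^^ Suc n) z = z" using y unfolding desc_def by auto
    then have "z = r0" using cycle[OF T z, of "Suc n"] by simp
    then show False using zr by simp
  qed
  have disj: "subtree M pred y1 \<inter> subtree M pred y2 = {}" if "y1 \<in> ?D" "y2 \<in> ?D" "y1 \<noteq> y2" for y1 y2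
  proof (rule ccontr)
    assume "subtree M pred y1 \<inter> subtree M pred y2 \<noteq> {}"
    then obtain v i j where v: "v \<in> M" "(pred ^^ i) v = y1" "(pred ^^ j) v = y2" unfolding subtree_def by auto
    have gen: False if "i < j" "(pred ^^ i) v = u1" "(pred ^^ j) v = u2" "u1 \<in> ?D" "u2 \<in> ?D" for i j u1 u2
    proof -
      have "(pred ^^ (j - i)) ((pred ^^ i) v) = (pred ^^ j) v" using that(1)
        by (simp add: funpow_add[symmetric, THEN fun_cong, simplified comp_def])
      then have "(pred ^^ (j - i)) u1 = u2" using that by simp
      moreover have "pred u1 = z" using that(4) unfolding desc_def by simp
      moreover have "j - i \<ge> 1" using that(1) by simp
      ultimately show False using cyc[of "j - i" u2 u1] that(5) by blast
    qed
    show False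
    proof (cases "i < j")
      case True then show ?thesis using gen[of i j y1 y2] v that by blast
    next
      case False
      then have "j < i \<or> i = j" by auto
      then show ?thesis using gen[of j i y2 y1] v that by auto
    qed
  qed
  have finD: "finite ?D" using fin unfolding desc_def by auto
  have finS: "finite (subtree M pred y)" for y using fin unfolding subtree_def by auto
  have "cT M pred z a = a z + (\<Sum>v\<in>(\<Union>y\<in>?D. subtree M pred y). a v)"
    unfolding cT_def set using notin finD finS by (subst sum.insert) auto
  also have "(\<Sum>v\<in>(\<Union>y\<in>?D. subtree M pred y). a v) = (\<Sum>y\<in>?D. cT M pred y a)"
    unfolding cT_def using finD finS disj by (subst sum.UNION_disjoint) auto
  finally show ?thesis .
qed


lemma pnorm_sum:
  assumes N: "p_norm p N" and fin: "finite S"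
  shows "N (\<Sum>i\<in>S. v i) powr p \<le> (\<Sum>i\<in>S. N (v i) powr p)"
  using fin
proof (induction S rule: finite_induct)
  case empty
  have "N 0 = 0" using N unfolding p_norm_def by blast
  then show ?case by simp
next
  case (insert x F)
  have "N (\<Sum>i\<in>insert x F. v i) powr p = N (v x + (\<Sum>i\<in>F. v i)) powr p"
    using insert by simp
  also have "\<dots> \<le> N (v x) powr p + N (\<Sum>i\<in>F. v i) powr p"
    using N unfolding p_norm_def by blast
  also have "\<dots> \<le> N (v x) powr p + (\<Sum>i\<in>F. N (v i) powr p)" using insert by simp
  finally show ?case using insert by simp
qed

theorem lemma3p4:
  fixes p :: real and M :: "'a set" and r0 z :: 'a and d :: "'a \<Rightarrow> 'a \<Rightarrow> real"
    and a :: "'a \<Rightarrow> real" and pred :: "'a \<Rightarrow> 'a"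
    and N :: "'y::real_vector \<Rightarrow> real" and f :: "'a \<Rightarrow> 'y"
  assumes "0 < p" "p < 1"
    and "finite M" "r0 \<in> M" "p_metric p M d"
    and "z \<in> M - {r0}" "a z = 0"
    and "is_tree M r0 pred"
    and "card (desc M r0 pred z) \<ge> 1"
    and "Tz p M r0 d pred z a \<ge>
           (\<Sum>y\<in>desc M r0 pred z. \<bar>cT M pred y a\<bar> powr p * d (pred z) y powr p)"
    and "p_banach p N"
    and "f r0 = 0"
    and "\<forall>x\<in>M - {z}. \<forall>y\<in>M - {z}. N (f x - f y) \<le> d x y"
  shows "Tnorm p M r0 d pred a \<ge> N (\<Sum>x\<in>M - {r0, z}. a x *\<^sub>R f x)"
proof -
  note p = assms(1) and fin = assms(3) and r0 = assms(4) and pm = assms(5)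
  note az = assms(7) and T = assms(8) and hyp = assms(10) and f0 = assms(12) and lip = assms(13)
  have zM: "z \<in> M" and zr: "z \<noteq> r0" using assms(6) by auto
  have Nn: "p_norm p N" using assms(11) unfolding p_banach_def by blast
  have Nnn: "N v \<ge> 0" for v using Nn unfolding p_norm_def by blast
  have N0: "N 0 = 0" using Nn unfolding p_norm_def by blast
  have Nsc: "N (c *\<^sub>R v) = \<bar>c\<bar> * N v" for c v using Nn unfolding p_norm_def by blast
  have dnn: "d x y \<ge> 0" "d x y = d y x" if "x \<in> M" "y \<in> M" for x y
    using pm that unfolding p_metric_def by auto
  have predM: "pred x \<in> M" if "x \<in> M" for x using T that unfolding is_tree_def by auto
  define pz where "pz = pred z"
  have pzM: "pz \<in> M" using predM zM pz_def by simp
  have pzz: "pz \<noteq> z"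
  proof
    assume "pz = z"
    then have "(pred ^^ 1) z = z" using pz_def by simp
    then show False using cycle[OF T zM, of 1] zr by simp
  qed
  define D where "D = desc M r0 pred z"
  define c where "c x = cT M pred x a" for x
  define g where "g = f(z := f pz)"
  have g0: "g r0 = 0" using f0 zr unfolding g_def by simp
  have DM: "D \<subseteq> M - {r0} - {z}" using pzz unfolding D_def desc_def pz_def by auto
  have finA: "finite (M - {r0})" using fin by simp
  have predD: "pred x = z" if "x \<in> D" for x using that unfolding D_def desc_def by auto
  define S where "S = (\<Sum>x\<in>M - {r0, z}. a x *\<^sub>R f x)"
  have "S = (\<Sum>x\<in>M - {r0}. a x *\<^sub>R g x)"
  proof -
    have "(\<Sum>x\<in>M - {r0}. a x *\<^sub>R g x) = a z *\<^sub>R g z + (\<Sum>x\<in>M - {r0} - {z}. a x *\<^sub>R g x)"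
      using finA zM zr by (subst sum.remove[of _ z]) auto
    also have "\<dots> = (\<Sum>x\<in>M - {r0} - {z}. a x *\<^sub>R f x)"
      using az unfolding g_def by simp
    finally show ?thesis unfolding S_def by (simp add: insert_commute set_diff_eq)
  qed
  also have "\<dots> = (\<Sum>x\<in>M - {r0}. c x *\<^sub>R (g x - g (pred x)))"
    unfolding c_def by (rule abel[where g=g, OF T fin r0 g0])
  finally have Seq: "S = (\<Sum>x\<in>M - {r0}. c x *\<^sub>R (g x - g (pred x)))" .
  define F where "F x = (if x = z then 0 else if x \<in> D then \<bar>c x\<bar> powr p * d pz x powr p
      else \<bar>c x * d (pred x) x\<bar> powr p)" for x
  define G where "G x = \<bar>c x * d (pred x) x\<bar> powr p" for x
  have step1: "N S powr p \<le> (\<Sum>x\<in>M - {r0}. N (c x *\<^sub>R (g x - g (pred x))) powr p)"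
    unfolding Seq by (rule pnorm_sum[OF Nn finA])
  have step2: "N (c x *\<^sub>R (g x - g (pred x))) powr p \<le> F x" if x: "x \<in> M - {r0}" for x
  proof -
    have eq: "N (c x *\<^sub>R (g x - g (pred x))) powr p = \<bar>c x\<bar> powr p * N (g x - g (pred x)) powr p"
      unfolding Nsc by (simp add: powr_mult)
    show ?thesis
    proof (cases "x = z")
      case True
      then have "g x - g (pred x) = 0" unfolding g_def using pzz pz_def by simp
      then show ?thesis using True eq N0 unfolding F_def by simp
    next
      case xz: False
      show ?thesis
      proof (cases "x \<in> D")
        case True
        have "g x - g (pred x) = f x - f pz" unfolding g_def using xz pzz predD[OF True] by simp
        moreover have "N (f x - f pz) \<le> d pz x"
        proof -
          have "x \<in> M - {z}" "pz \<in> M - {z}" using x xz pzM pzz by auto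
          then have "N (f x - f pz) \<le> d x pz" using lip by blast
          then show ?thesis using dnn[of x pz] x pzM by simp
        qed
        ultimately have "N (g x - g (pred x)) powr p \<le> d pz x powr p"
          using p Nnn by (simp add: powr_mono2)
        then show ?thesis using eq True xz unfolding F_def
          by (simp add: mult_left_mono)
      next
        case False
        have pxz: "pred x \<noteq> z" using False x unfolding D_def desc_def by auto
        have pxM: "pred x \<in> M" using predM x by simp
        have "g x - g (pred x) = f x - f (pred x)" unfolding g_def using xz pxz by simp
        moreover have "N (f x - f (pred x)) \<le> d (pred x) x"
        proof -
          have "x \<in> M - {z}" "pred x \<in> M - {z}" using x xz pxM pxz by auto
          then have "N (f x - f (pred x)) \<le> d x (pred x)" using lip by blast
          then show ?thesis using dnn[of x "pred x"] x pxM by simp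
        qed
        ultimately have "N (g x - g (pred x)) powr p \<le> d (pred x) x powr p"
          using p Nnn by (simp add: powr_mono2)
        moreover have "\<bar>c x * d (pred x) x\<bar> powr p = \<bar>c x\<bar> powr p * d (pred x) x powr p"
          using dnn[OF pxM, of x] x by (simp add: abs_mult powr_mult)
        ultimately show ?thesis using eq False xz unfolding F_def
          by (simp add: mult_left_mono)
      qed
    qed
  qed
  have sumG: "(\<Sum>x\<in>M - {r0}. G x) = G z + (\<Sum>x\<in>D. G x) + (\<Sum>x\<in>M - {r0} - {z} - D. G x)"
  proof -
    have "(\<Sum>x\<in>M - {r0}. G x) = G z + (\<Sum>x\<in>M - {r0} - {z}. G x)"
      using finA zM zr by (subst sum.remove[of _ z]) auto
    also have "(\<Sum>x\<in>M - {r0} - {z}. G x) = (\<Sum>x\<in>M - {r0} - {z} - D. G x) + (\<Sum>x\<in>D. G x)"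
      using finA DM by (intro sum.subset_diff) auto
    finally show ?thesis by simp
  qed
  have sumF: "(\<Sum>x\<in>M - {r0}. F x) = F z + (\<Sum>x\<in>D. F x) + (\<Sum>x\<in>M - {r0} - {z} - D. F x)"
  proof -
    have "(\<Sum>x\<in>M - {r0}. F x) = F z + (\<Sum>x\<in>M - {r0} - {z}. F x)"
      using finA zM zr by (subst sum.remove[of _ z]) auto
    also have "(\<Sum>x\<in>M - {r0} - {z}. F x) = (\<Sum>x\<in>M - {r0} - {z} - D. F x) + (\<Sum>x\<in>D. F x)"
      using finA DM by (intro sum.subset_diff) auto
    finally show ?thesis by simp
  qed
  have restFG: "(\<Sum>x\<in>M - {r0} - {z} - D. F x) = (\<Sum>x\<in>M - {r0} - {z} - D. G x)"
    by (rule sum.cong) (auto simp: F_def G_def)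
  have Fz: "F z = 0" unfolding F_def by simp
  have DF: "(\<Sum>x\<in>D. F x) = (\<Sum>y\<in>desc M r0 pred z. \<bar>cT M pred y a\<bar> powr p * d (pred z) y powr p)"
    unfolding D_def[symmetric] pz_def[symmetric] c_def[symmetric]
    by (rule sum.cong) (use pzz in \<open>auto simp: F_def D_def desc_def pz_def\<close>)
  have cz: "c z = (\<Sum>y\<in>D. c y)"
    using subtree_decomp[OF T fin zM zr, of a] az unfolding c_def D_def by simp
  have Tzeq: "Tz p M r0 d pred z a = G z + (\<Sum>x\<in>D. G x)"
  proof -
    have "G z = \<bar>\<Sum>y\<in>D. c y\<bar> powr p * d (pred z) z powr p"
      unfolding G_def cz using dnn[OF predM[OF zM] zM] by (simp add: abs_mult powr_mult)
    moreover have "(\<Sum>x\<in>D. G x) = (\<Sum>y\<in>D. \<bar>c y\<bar> powr p * d z y powr p)"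
    proof (rule sum.cong[OF refl])
      fix y assume y: "y \<in> D"
      then have "y \<in> M" using DM by auto
      then show "G y = \<bar>c y\<bar> powr p * d z y powr p"
        unfolding G_def predD[OF y] using dnn[OF zM \<open>y \<in> M\<close>] by (simp add: abs_mult powr_mult)
    qed
    ultimately show ?thesis unfolding Tz_def D_def c_def by simp
  qed
  have FG: "(\<Sum>x\<in>M - {r0}. F x) \<le> (\<Sum>x\<in>M - {r0}. G x)"
    using sumF sumG restFG Fz DF Tzeq hyp by simp
  define s where "s = (\<Sum>x\<in>M - {r0}. G x)"
  have s0: "s \<ge> 0" unfolding s_def G_def by (simp add: sum_nonneg)
  have Tn: "Tnorm p M r0 d pred a = s powr (1 / p)"
    unfolding Tnorm_def s_def G_def c_def by simp
  have Tnp: "Tnorm p M r0 d pred a powr p = s"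
    using Tn p s0 by (simp add: powr_powr powr_one)
  have NSp: "N S powr p \<le> Tnorm p M r0 d pred a powr p"
  proof -
    have "(\<Sum>x\<in>M - {r0}. N (c x *\<^sub>R (g x - g (pred x))) powr p) \<le> (\<Sum>x\<in>M - {r0}. F x)"
      by (rule sum_mono) (rule step2)
    then show ?thesis using step1 FG Tnp unfolding s_def by linarith
  qed
  show ?thesis
    unfolding S_def[symmetric]
  proof (rule ccontr)
    assume "\<not> N S \<le> Tnorm p M r0 d pred a"
    then have "Tnorm p M r0 d pred a < N S" by simp
    moreover have "Tnorm p M r0 d pred a \<ge> 0" using Tn by simp
    ultimately have "Tnorm p M r0 d pred a powr p < N S powr p" using p by (simp add: powr_less_mono2)
    then show False using NSp by simp
  qed
qed

end
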